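(* Let $\mathbb{F}$ be a field, $\prec$ a term order on the monomials of $\mathbb{F}[x_1,\ldots,x_n]$, $\mathcal{F}\subseteq\mathbb{F}^n$ a finite set, $h\in\mathbb{F}^n\setminus\mathcal{F}$, and $\mathcal{T}:=\mathcal{F}\cup\{h\}$. Let $\{g_1,\ldots,g_s\}$ be the reduced Gröbner basis of $I(\mathcal{F})$ with respect to $\prec$, indexed so that $m_1\prec m_2\prec\cdots\prec m_s$ where $m_j:=\mathrm{lm}_\prec(g_j)$. Let $i:=\min\{j: g_j(h)\ne 0\}$. Then $\mathrm{Sm}(\prec,\mathcal{T})=\mathrm{Sm}(\prec,\mathcal{F})\cup\{m_i\}$.
   Context: $I(\mathcal{F})$ is the ideal of polynomials vanishing on $\mathcal{F}$; $\mathrm{lm}_\prec(f)$ is the $\prec$-largest monomial of $f$ with nonzero coefficient; $\mathrm{Sm}(\prec,\mathcal{F})$ is the set of monomials that are not leading monomials of nonzero elements of $I(\mathcal{F})$. A Gröbner basis $\{g_1,\dots,g_s\}$ of an ideal $I$ is a finite subset of $I$ whose leading monomials generate the monomial ideal of all leading monomials of $I$; it is reduced if each $\mathrm{lm}(g_j)$ has coefficient 1 and no monomial of $g_j$ is divisible by $\mathrm{lm}(g_l)$ for $l\ne j$. *)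

theory Defs
  imports Main "HOL-Library.Poly_Mapping"
begin

text \<open>Multivariate polynomials in the variables x_0, ..., x_(n-1) over a field:
  monomials are exponent vectors (finitely supported maps nat to nat) supported in {..<n},
  polynomials are finitely supported maps from monomials to coefficients.
  Points of F^n are lists of length n.\<close>

type_synonym monom = "nat \<Rightarrow>\<^sub>0 nat"
type_synonym 'a mpoly = "monom \<Rightarrow>\<^sub>0 'a"

definition monoms :: "nat \<Rightarrow> monom set" where
  "monoms n = {m. Poly_Mapping.keys m \<subseteq> {..<n}}"

definition polys :: "nat \<Rightarrow> ('a::zero) mpoly set" where
  "polys n = {p. Poly_Mapping.keys p \<subseteq> monoms n}"

definition mdvd :: "monom \<Rightarrow> monom \<Rightarrow> bool" where
  "mdvd a b \<longleftrightarrow> (\<forall>i. Poly_Mapping.lookup a i \<le> Poly_Mapping.lookup b i)"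

definition eval_mpoly :: "('a::field) mpoly \<Rightarrow> 'a list \<Rightarrow> 'a" where
  "eval_mpoly p x = (\<Sum>m\<in>Poly_Mapping.keys p. Poly_Mapping.lookup p m * (\<Prod>i\<in>Poly_Mapping.keys m. (x ! i) ^ Poly_Mapping.lookup m i))"

definition vanish_ideal :: "nat \<Rightarrow> ('a::field) list set \<Rightarrow> 'a mpoly set" where
  "vanish_ideal n F = {p \<in> polys n. \<forall>x\<in>F. eval_mpoly p x = 0}"

text \<open>A term order (given as its reflexive version \<preceq>) on the monomials in n variables.\<close>
definition term_order :: "nat \<Rightarrow> (monom \<Rightarrow> monom \<Rightarrow> bool) \<Rightarrow> bool" where
  "term_order n ord \<longleftrightarrow>
     (\<forall>a\<in>monoms n. ord a a) \<and>
     (\<forall>a\<in>monoms n. \<forall>b\<in>monoms n. ord a b \<and> ord b a \<longrightarrow> a = b) \<and>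
     (\<forall>a\<in>monoms n. \<forall>b\<in>monoms n. \<forall>c\<in>monoms n. ord a b \<and> ord b c \<longrightarrow> ord a c) \<and>
     (\<forall>a\<in>monoms n. \<forall>b\<in>monoms n. ord a b \<or> ord b a) \<and>
     (\<forall>a\<in>monoms n. ord 0 a) \<and>
     (\<forall>a\<in>monoms n. \<forall>b\<in>monoms n. \<forall>c\<in>monoms n. ord a b \<longrightarrow> ord (a + c) (b + c))"

definition strict_ord :: "(monom \<Rightarrow> monom \<Rightarrow> bool) \<Rightarrow> monom \<Rightarrow> monom \<Rightarrow> bool" where
  "strict_ord ord a b \<longleftrightarrow> ord a b \<and> a \<noteq> b"

definition lm :: "(monom \<Rightarrow> monom \<Rightarrow> bool) \<Rightarrow> ('a::zero) mpoly \<Rightarrow> monom" where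
  "lm ord p = (THE m. m \<in> Poly_Mapping.keys p \<and> (\<forall>m'\<in>Poly_Mapping.keys p. ord m' m))"

definition lc :: "(monom \<Rightarrow> monom \<Rightarrow> bool) \<Rightarrow> ('a::zero) mpoly \<Rightarrow> 'a" where
  "lc ord p = Poly_Mapping.lookup p (lm ord p)"

definition Sm :: "nat \<Rightarrow> (monom \<Rightarrow> monom \<Rightarrow> bool) \<Rightarrow> ('a::field) list set \<Rightarrow> monom set" where
  "Sm n ord F = {m \<in> monoms n. \<not> (\<exists>f\<in>vanish_ideal n F. f \<noteq> 0 \<and> lm ord f = m)}"

definition groebner_basis ::
  "(monom \<Rightarrow> monom \<Rightarrow> bool) \<Rightarrow> ('a::field) mpoly set \<Rightarrow> 'a mpoly set \<Rightarrow> bool" where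
  "groebner_basis ord I G \<longleftrightarrow> finite G \<and> G \<subseteq> I \<and> 0 \<notin> G \<and>
     (\<forall>f\<in>I. f \<noteq> 0 \<longrightarrow> (\<exists>g\<in>G. mdvd (lm ord g) (lm ord f)))"

definition reduced_groebner_basis ::
  "(monom \<Rightarrow> monom \<Rightarrow> bool) \<Rightarrow> ('a::field) mpoly set \<Rightarrow> 'a mpoly set \<Rightarrow> bool" where
  "reduced_groebner_basis ord I G \<longleftrightarrow> groebner_basis ord I G \<and>
     (\<forall>g\<in>G. lc ord g = 1) \<and>
     (\<forall>g\<in>G. \<forall>g'\<in>G. g' \<noteq> g \<longrightarrow> (\<forall>m\<in>Poly_Mapping.keys g. \<not> mdvd (lm ord g') m))"

end

theory Submission
  imports Defs "HOL-Library.Ramsey"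
begin

lemma to_props:
  assumes "term_order n ord"
  shows "\<And>a. a \<in> monoms n \<Longrightarrow> ord a a"
    and "\<And>a b. a \<in> monoms n \<Longrightarrow> b \<in> monoms n \<Longrightarrow> ord a b \<Longrightarrow> ord b a \<Longrightarrow> a = b"
    and "\<And>a b c. a \<in> monoms n \<Longrightarrow> b \<in> monoms n \<Longrightarrow> c \<in> monoms n \<Longrightarrow> ord a b \<Longrightarrow> ord b c \<Longrightarrow> ord a c"
    and "\<And>a b. a \<in> monoms n \<Longrightarrow> b \<in> monoms n \<Longrightarrow> ord a b \<or> ord b a"
    and "\<And>a. a \<in> monoms n \<Longrightarrow> ord 0 a"
    and "\<And>a b c. a \<in> monoms n \<Longrightarrow> b \<in> monoms n \<Longrightarrow> c \<in> monoms n \<Longrightarrow> ord a b \<Longrightarrow> ord (c + a) (c + b)"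
  using assms unfolding term_order_def
  apply blast
  using assms unfolding term_order_def apply blast
  using assms unfolding term_order_def apply blast
  using assms unfolding term_order_def apply blast
  using assms unfolding term_order_def apply blast
  using assms unfolding term_order_def by (metis add.commute)

lemma monoms_add: "a \<in> monoms n \<Longrightarrow> b \<in> monoms n \<Longrightarrow> a + b \<in> monoms n"
  unfolding monoms_def using keys_add[of a b] by auto

lemma monoms_diff: "a \<in> monoms n \<Longrightarrow> a - b \<in> monoms n"
proof -
  have "Poly_Mapping.keys (a - b) \<subseteq> Poly_Mapping.keys a"
    by (auto simp: in_keys_iff lookup_minus)
  then show "a \<in> monoms n \<Longrightarrow> a - b \<in> monoms n" unfolding monoms_def by auto
qed

lemma monoms_zero: "0 \<in> monoms n"
  unfolding monoms_def by simp

lemma mdvd_add: "mdvd a b \<Longrightarrow> a + (b - a) = b"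
  unfolding mdvd_def by (intro poly_mapping_eqI) (simp add: lookup_add lookup_minus)

lemma mdvd_ord:
  assumes "term_order n ord" "a \<in> monoms n" "b \<in> monoms n" "mdvd a b"
  shows "ord a b"
proof -
  have d: "b - a \<in> monoms n" using assms monoms_diff by blast
  have "ord 0 (b - a)" using to_props(5)[OF assms(1) d] .
  then have "ord (a + 0) (a + (b - a))" using to_props(6)[OF assms(1) monoms_zero d assms(2)] by blast
  then show ?thesis using mdvd_add[OF assms(4)] by simp
qed

lemma max_exists:
  assumes "term_order n ord" "finite K" "K \<noteq> {}" "K \<subseteq> monoms n"
  shows "\<exists>m\<in>K. \<forall>m'\<in>K. ord m' m"
  using assms(2,3,4)
proof (induction K rule: finite_ne_induct)
  case (singleton x) then show ?case using to_props(1)[OF assms(1)] by auto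
next
  case (insert x F)
  then obtain m where m: "m \<in> F" "\<forall>m'\<in>F. ord m' m" by auto
  have xm: "x \<in> monoms n" "m \<in> monoms n" using insert m by auto
  show ?case
  proof (cases "ord x m")
    case True then show ?thesis using m by auto
  next
    case False
    then have "ord m x" using to_props(4)[OF assms(1) xm] by auto
    have "\<forall>m'\<in>insert x F. ord m' x"
    proof
      fix m' assume "m' \<in> insert x F"
      then show "ord m' x"
      proof
        assume "m' = x" then show ?thesis using to_props(1)[OF assms(1)] xm by simp
      next
        assume "m' \<in> F"
        then show ?thesis using m \<open>ord m x\<close> to_props(3)[OF assms(1)] xm insert.prems by blast
      qed
    qed
    then show ?thesis by blast
  qed
qed

lemma lm_eqI:
  assumes "term_order n ord" "Poly_Mapping.keys p \<subseteq> monoms n" "m \<in> Poly_Mapping.keys p" "\<forall>m'\<in>Poly_Mapping.keys p. ord m' m"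
  shows "lm ord p = m"
  unfolding lm_def
proof (rule the_equality)
  show "m \<in> Poly_Mapping.keys p \<and> (\<forall>m'\<in>Poly_Mapping.keys p. ord m' m)" using assms by auto
next
  fix m' assume "m' \<in> Poly_Mapping.keys p \<and> (\<forall>m''\<in>Poly_Mapping.keys p. ord m'' m')"
  then show "m' = m" using assms to_props(2)[OF assms(1)] by blast
qed

lemma lm_props:
  assumes "term_order n ord" "p \<in> polys n" "p \<noteq> 0"
  shows "lm ord p \<in> Poly_Mapping.keys p" "\<forall>m'\<in>Poly_Mapping.keys p. ord m' (lm ord p)" "lm ord p \<in> monoms n"
proof -
  have K: "Poly_Mapping.keys p \<subseteq> monoms n" using assms(2) unfolding polys_def by auto
  have "Poly_Mapping.keys p \<noteq> {}" using assms(3) by auto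
  then obtain m where m: "m \<in> Poly_Mapping.keys p" "\<forall>m'\<in>Poly_Mapping.keys p. ord m' m"
    using max_exists[OF assms(1) finite_keys _ K] by blast
  have "lm ord p = m" using lm_eqI[OF assms(1) K m] .
  then show "lm ord p \<in> Poly_Mapping.keys p" "\<forall>m'\<in>Poly_Mapping.keys p. ord m' (lm ord p)" "lm ord p \<in> monoms n"
    using m K by auto
qed

definition WR :: "nat \<Rightarrow> (monom \<Rightarrow> monom \<Rightarrow> bool) \<Rightarrow> (monom \<times> monom) set" where
  "WR n ord = {(a,b). a \<in> monoms n \<and> b \<in> monoms n \<and> strict_ord ord a b}"

lemma wf_WR:
  assumes "term_order n ord"
  shows "wf (WR n ord)"
proof (rule trans_disj_wf_implies_wf)
  show "trans (WR n ord)"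
  proof (rule transI)
    fix x y z assume "(x, y) \<in> WR n ord" "(y, z) \<in> WR n ord"
    then have xyz: "x \<in> monoms n" "y \<in> monoms n" "z \<in> monoms n" "ord x y" "ord y z" "x \<noteq> y" "y \<noteq> z"
      unfolding WR_def strict_ord_def by auto
    have "ord x z" using to_props(3)[OF assms xyz(1-5)] .
    moreover have "x \<noteq> z"
    proof
      assume "x = z"
      then have "ord y x" using xyz by simp
      then show False using to_props(2)[OF assms xyz(1,2,4)] xyz(6) by simp
    qed
    ultimately show "(x, z) \<in> WR n ord" using xyz unfolding WR_def strict_ord_def by auto
  qed
  show "disj_wf (WR n ord)"
    unfolding disj_wf
  proof (rule exI[of _ "\<lambda>k. inv_image less_than (\<lambda>a::monom. Poly_Mapping.lookup a k)"], rule exI[of _ n], intro conjI allI impI)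
    show "wf (inv_image less_than (\<lambda>a::monom. Poly_Mapping.lookup a k))" for k by simp
    show "WR n ord \<subseteq> (\<Union>k<n. inv_image less_than (\<lambda>a. Poly_Mapping.lookup a k))"
    proof
      fix x assume "x \<in> WR n ord"
      then obtain a b where x: "x = (a,b)" "a \<in> monoms n" "b \<in> monoms n" "ord a b" "a \<noteq> b"
        unfolding WR_def strict_ord_def by auto
      have "\<not> mdvd b a"
        using mdvd_ord[OF assms x(3) x(2)] x to_props(2)[OF assms] by blast
      then obtain k where k: "Poly_Mapping.lookup a k < Poly_Mapping.lookup b k" unfolding mdvd_def by (auto simp: not_le)
      then have "k \<in> Poly_Mapping.keys b" by (auto simp: in_keys_iff)
      then have "k < n" using x(3) unfolding monoms_def by auto
      then show "x \<in> (\<Union>k<n. inv_image less_than (\<lambda>a. Poly_Mapping.lookup a k))" using k x by auto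
    qed
  qed
qed


definition mon :: "monom \<Rightarrow> ('a::field) list \<Rightarrow> 'a" where
  "mon m x = (\<Prod>i\<in>Poly_Mapping.keys m. (x ! i) ^ Poly_Mapping.lookup m i)"

lemma eval_mon: "eval_mpoly p x = (\<Sum>m\<in>Poly_Mapping.keys p. Poly_Mapping.lookup p m * mon m x)"
  unfolding eval_mpoly_def mon_def by simp

lemma mon_superset:
  assumes "finite K" "Poly_Mapping.keys m \<subseteq> K"
  shows "mon m x = (\<Prod>i\<in>K. (x ! i) ^ Poly_Mapping.lookup m i)"
  unfolding mon_def
  by (rule prod.mono_neutral_left[OF assms]) (auto simp: in_keys_iff)

lemma mon_add: "mon (a + b) x = mon a x * mon b x"
proof -
  let ?K = "Poly_Mapping.keys a \<union> Poly_Mapping.keys b"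
  have "mon (a + b) x = (\<Prod>i\<in>?K. (x ! i) ^ Poly_Mapping.lookup (a + b) i)"
    by (rule mon_superset) (use keys_add[of a b] in auto)
  also have "\<dots> = (\<Prod>i\<in>?K. (x ! i) ^ Poly_Mapping.lookup a i * (x ! i) ^ Poly_Mapping.lookup b i)"
    by (simp add: lookup_add power_add)
  also have "\<dots> = mon a x * mon b x"
    by (simp add: prod.distrib mon_superset[of ?K a] mon_superset[of ?K b])
  finally show ?thesis .
qed

lemma mon_zero: "mon 0 x = 1"
  unfolding mon_def by simp

lemma mon_single: "mon (Poly_Mapping.single k 1) x = x ! k"
  unfolding mon_def by simp

lemma mon_single': "mon (Poly_Mapping.single k (Suc 0)) x = x ! k"
  unfolding mon_def by simp

lemma eval_superset:
  assumes "finite K" "Poly_Mapping.keys p \<subseteq> K"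
  shows "eval_mpoly p x = (\<Sum>m\<in>K. Poly_Mapping.lookup p m * mon m x)"
  unfolding eval_mon
  by (rule sum.mono_neutral_left[OF assms]) (auto simp: in_keys_iff)

lemma eval_zero: "eval_mpoly 0 x = 0"
  unfolding eval_mpoly_def by simp

lemma keys_diff: "Poly_Mapping.keys (p - q) \<subseteq> Poly_Mapping.keys p \<union> Poly_Mapping.keys (q::('a::field) mpoly)"
  by (auto simp: in_keys_iff lookup_minus)

lemma eval_diff: "eval_mpoly (p - q) x = eval_mpoly p x - eval_mpoly (q::('a::field) mpoly) x"
proof -
  let ?K = "Poly_Mapping.keys p \<union> Poly_Mapping.keys q"
  have "eval_mpoly (p - q) x = (\<Sum>m\<in>?K. Poly_Mapping.lookup (p - q) m * mon m x)"
    by (rule eval_superset) (use keys_diff in auto)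
  also have "\<dots> = (\<Sum>m\<in>?K. Poly_Mapping.lookup p m * mon m x) - (\<Sum>m\<in>?K. Poly_Mapping.lookup q m * mon m x)"
    by (simp add: lookup_minus left_diff_distrib sum_subtractf)
  also have "\<dots> = eval_mpoly p x - eval_mpoly q x"
    by (simp add: eval_superset[of ?K p] eval_superset[of ?K q])
  finally show ?thesis .
qed

lemma polys_diff: "p \<in> polys n \<Longrightarrow> q \<in> polys n \<Longrightarrow> p - (q::('a::field) mpoly) \<in> polys n"
  unfolding polys_def using keys_diff by blast

definition mshift :: "'a::field \<Rightarrow> monom \<Rightarrow> 'a mpoly \<Rightarrow> 'a mpoly" where
  "mshift c d p = Abs_poly_mapping (\<lambda>k. if mdvd d k then c * Poly_Mapping.lookup p (k - d) else 0)"

lemma lookup_mshift: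
  "Poly_Mapping.lookup (mshift c d p) k = (if mdvd d k then c * Poly_Mapping.lookup p (k - d) else 0)"
proof -
  have "{k. (if mdvd d k then c * Poly_Mapping.lookup p (k - d) else 0) \<noteq> 0} \<subseteq> (\<lambda>m. d + m) ` Poly_Mapping.keys p"
  proof
    fix k assume "k \<in> {k. (if mdvd d k then c * Poly_Mapping.lookup p (k - d) else 0) \<noteq> 0}"
    then have "mdvd d k" "Poly_Mapping.lookup p (k - d) \<noteq> 0" by (auto split: if_splits)
    then show "k \<in> (\<lambda>m. d + m) ` Poly_Mapping.keys p"
      using mdvd_add[of d k] by (auto simp: in_keys_iff intro!: image_eqI[of _ _ "k - d"])
  qed
  then have "finite {k. (if mdvd d k then c * Poly_Mapping.lookup p (k - d) else 0) \<noteq> 0}"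
    by (rule finite_subset) simp
  then show ?thesis unfolding mshift_def by simp
qed

lemma mdvd_self_add: "mdvd d (d + m)"
  unfolding mdvd_def by (simp add: lookup_add)

lemma add_diff_monom: "(d + m) - d = (m::monom)"
  by (rule poly_mapping_eqI) (simp add: lookup_add lookup_minus)

lemma lookup_mshift_add: "Poly_Mapping.lookup (mshift c d p) (d + m) = c * Poly_Mapping.lookup p m"
  by (simp add: lookup_mshift mdvd_self_add add_diff_monom)

lemma keys_mshift_sub: "Poly_Mapping.keys (mshift c d p) \<subseteq> (\<lambda>m. d + m) ` Poly_Mapping.keys p"
proof
  fix k assume "k \<in> Poly_Mapping.keys (mshift c d p)"
  then have "mdvd d k" "Poly_Mapping.lookup p (k - d) \<noteq> 0" by (auto simp: in_keys_iff lookup_mshift split: if_splits)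
  then show "k \<in> (\<lambda>m. d + m) ` Poly_Mapping.keys p"
    using mdvd_add[of d k] by (auto simp: in_keys_iff intro!: image_eqI[of _ _ "k - d"])
qed

lemma keys_mshift: "c \<noteq> 0 \<Longrightarrow> Poly_Mapping.keys (mshift c d p) = (\<lambda>m. d + m) ` Poly_Mapping.keys p"
  using keys_mshift_sub[of c d p] by (auto simp: in_keys_iff lookup_mshift_add)

lemma polys_mshift: "d \<in> monoms n \<Longrightarrow> p \<in> polys n \<Longrightarrow> mshift c d p \<in> polys n"
  unfolding polys_def using keys_mshift_sub[of c d p] monoms_add by blast

lemma eval_mshift: "eval_mpoly (mshift c d p) x = c * mon d x * eval_mpoly p x"
proof -
  let ?K = "(\<lambda>m. d + m) ` Poly_Mapping.keys p"
  have inj: "inj_on (\<lambda>m. d + m) (Poly_Mapping.keys p)" by (rule inj_onI) simp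
  have "eval_mpoly (mshift c d p) x = (\<Sum>k\<in>?K. Poly_Mapping.lookup (mshift c d p) k * mon k x)"
    by (rule eval_superset) (use keys_mshift_sub[of c d p] in auto)
  also have "\<dots> = (\<Sum>m\<in>Poly_Mapping.keys p. Poly_Mapping.lookup (mshift c d p) (d + m) * mon (d + m) x)"
    by (simp add: sum.reindex[OF inj])
  also have "\<dots> = (\<Sum>m\<in>Poly_Mapping.keys p. c * mon d x * (Poly_Mapping.lookup p m * mon m x))"
    by (simp add: lookup_mshift_add mon_add mult_ac)
  also have "\<dots> = c * mon d x * eval_mpoly p x"
    by (simp add: eval_mon sum_distrib_left)
  finally show ?thesis .
qed

lemma lm_mshift:
  assumes TO: "term_order n ord" and p: "p \<in> polys n" "p \<noteq> 0" and d: "d \<in> monoms n" and c: "c \<noteq> 0"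
  shows "lm ord (mshift c d p) = d + lm ord p" "mshift c d p \<noteq> 0"
proof -
  have K: "Poly_Mapping.keys (mshift c d p) \<subseteq> monoms n"
    using polys_mshift[OF d p(1)] unfolding polys_def by auto
  have pk: "Poly_Mapping.keys p \<subseteq> monoms n" using p unfolding polys_def by auto
  note L = lm_props[OF TO p]
  have "d + lm ord p \<in> Poly_Mapping.keys (mshift c d p)"
    using keys_mshift[OF c] L by auto
  moreover have "\<forall>m'\<in>Poly_Mapping.keys (mshift c d p). ord m' (d + lm ord p)"
    using keys_mshift[OF c] L to_props(6)[OF TO _ _ d] pk by auto
  ultimately show "lm ord (mshift c d p) = d + lm ord p" "mshift c d p \<noteq> 0"
    using lm_eqI[OF TO K] by auto
qed


lemma vanish_I: "p \<in> polys n \<Longrightarrow> (\<And>x. x \<in> F \<Longrightarrow> eval_mpoly p x = 0) \<Longrightarrow> p \<in> vanish_ideal n F"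
  unfolding vanish_ideal_def by auto

lemma descent:
  assumes TO: "term_order n ord"
    and GB: "groebner_basis ord (vanish_ideal n F) G"
    and lc1: "\<forall>g\<in>G. lc ord g = 1"
    and Rdown: "\<forall>a\<in>monoms n. \<forall>b\<in>monoms n. R b \<longrightarrow> ord a b \<longrightarrow> R a"
    and Rg: "\<forall>g\<in>G. R (lm ord g) \<longrightarrow> eval_mpoly g h = 0"
    and f: "f \<in> vanish_ideal n F" "\<forall>k\<in>Poly_Mapping.keys f. R k"
  shows "eval_mpoly f h = 0"
proof -
  have main: "\<forall>f. f \<in> vanish_ideal n F \<longrightarrow> f \<noteq> 0 \<longrightarrow> lm ord f = m \<longrightarrow> (\<forall>k\<in>Poly_Mapping.keys f. R k)
      \<longrightarrow> eval_mpoly f h = 0" for m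
    using wf_WR[OF TO]
  proof (induction m rule: wf_induct_rule)
    case (less m)
    show ?case
    proof (intro allI impI)
      fix f assume fI: "f \<in> vanish_ideal n F" and fnz: "f \<noteq> 0" and lmf: "lm ord f = m"
        and fR: "\<forall>k\<in>Poly_Mapping.keys f. R k"
      have fP: "f \<in> polys n" using fI unfolding vanish_ideal_def by auto
      have fK: "Poly_Mapping.keys f \<subseteq> monoms n" using fP unfolding polys_def by auto
      note Lf = lm_props[OF TO fP fnz]
      have mM: "m \<in> monoms n" using Lf lmf by auto
      obtain g where gG: "g \<in> G" and gd: "mdvd (lm ord g) m"
        using GB fI fnz lmf unfolding groebner_basis_def by blast
      have gI: "g \<in> vanish_ideal n F" and gnz: "g \<noteq> 0" using GB gG unfolding groebner_basis_def by auto
      have gP: "g \<in> polys n" using gI unfolding vanish_ideal_def by auto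
      have gK: "Poly_Mapping.keys g \<subseteq> monoms n" using gP unfolding polys_def by auto
      note Lg = lm_props[OF TO gP gnz]
      have ordgm: "ord (lm ord g) m" using mdvd_ord[OF TO Lg(3) mM gd] .
      have Rm: "R m" using fR Lf lmf by auto
      have Rgm: "R (lm ord g)" using Rdown Lg(3) mM Rm ordgm by blast
      have gh: "eval_mpoly g h = 0" using Rg gG Rgm by blast
      define d where "d = m - lm ord g"
      have dM: "d \<in> monoms n" unfolding d_def using monoms_diff[OF mM] .
      have dm: "d + lm ord g = m" unfolding d_def using mdvd_add[OF gd] by (simp add: add.commute)
      define c where "c = Poly_Mapping.lookup f m"
      have cnz: "c \<noteq> 0" unfolding c_def using Lf lmf by (auto simp: in_keys_iff)
      define f' where "f' = f - mshift c d g"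
      have f'P: "f' \<in> polys n" unfolding f'_def by (rule polys_diff[OF fP polys_mshift[OF dM gP]])
      have f'I: "f' \<in> vanish_ideal n F"
      proof (rule vanish_I[OF f'P])
        fix x assume "x \<in> F"
        then have "eval_mpoly f x = 0" "eval_mpoly g x = 0" using fI gI unfolding vanish_ideal_def by auto
        then show "eval_mpoly f' x = 0" unfolding f'_def by (simp add: eval_diff eval_mshift)
      qed
      have f'h: "eval_mpoly f' h = eval_mpoly f h" unfolding f'_def by (simp add: eval_diff eval_mshift gh)
      have lcg: "Poly_Mapping.lookup g (lm ord g) = 1" using lc1 gG unfolding lc_def by auto
      have lookm: "Poly_Mapping.lookup f' m = 0"
        unfolding f'_def using lookup_mshift_add[of c d g "lm ord g"] dm lcg
        by (simp add: lookup_minus c_def)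
      have keysf': "\<forall>k\<in>Poly_Mapping.keys f'. k \<in> monoms n \<and> ord k m \<and> k \<noteq> m"
      proof
        fix k assume kf: "k \<in> Poly_Mapping.keys f'"
        then have "k \<noteq> m" using lookm by (auto simp: in_keys_iff)
        moreover have "k \<in> monoms n \<and> ord k m"
        proof -
          have "k \<in> Poly_Mapping.keys f \<or> k \<in> Poly_Mapping.keys (mshift c d g)"
            using kf keys_diff[of f "mshift c d g"] unfolding f'_def by auto
          then show ?thesis
          proof
            assume "k \<in> Poly_Mapping.keys f" then show ?thesis using fK Lf lmf by auto
          next
            assume "k \<in> Poly_Mapping.keys (mshift c d g)"
            then obtain k' where k': "k' \<in> Poly_Mapping.keys g" "k = d + k'" using keys_mshift_sub by blast
            have "ord k' (lm ord g)" using Lg k' by auto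
            then have "ord (d + k') (d + lm ord g)" using to_props(6)[OF TO _ Lg(3) dM] gK k' by auto
            then show ?thesis using k' dm monoms_add[OF dM] gK by auto
          qed
        qed
        ultimately show "k \<in> monoms n \<and> ord k m \<and> k \<noteq> m" by blast
      qed
      show "eval_mpoly f h = 0"
      proof (cases "f' = 0")
        case True then show ?thesis using f'h eval_zero by metis
      next
        case False
        note Lf' = lm_props[OF TO f'P False]
        have "(lm ord f', m) \<in> WR n ord"
          using keysf' Lf' mM unfolding WR_def strict_ord_def by auto
        moreover have "\<forall>k\<in>Poly_Mapping.keys f'. R k"
          using keysf' Rdown mM Rm by blast
        ultimately have "eval_mpoly f' h = 0" using less f'I False by blast
        then show ?thesis using f'h by simp
      qed
    qed
  qed
  show ?thesis
  proof (cases "f = 0")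
    case True then show ?thesis by (simp add: eval_zero)
  next
    case False then show ?thesis using main f by blast
  qed
qed

lemma interp:
  assumes "finite F" "\<forall>x\<in>F. length x = n" "length h = n" "h \<notin> F"
  shows "\<exists>p\<in>polys n. (\<forall>x\<in>F. eval_mpoly p x = 0) \<and> eval_mpoly p h \<noteq> (0::'a::field)"
  using assms
proof (induction F rule: finite_induct)
  case empty
  have "Poly_Mapping.single 0 (1::'a) \<in> polys n" unfolding polys_def using monoms_zero by auto
  moreover have "eval_mpoly (Poly_Mapping.single 0 (1::'a)) h = 1"
    by (simp add: eval_mon mon_zero)
  ultimately show ?case by (intro bexI[of _ "Poly_Mapping.single 0 (1::'a)"]) auto
next
  case (insert y F)
  then obtain p where p: "p \<in> polys n" "\<forall>x\<in>F. eval_mpoly p x = 0" "eval_mpoly p h \<noteq> 0" by auto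
  have "y \<noteq> h" "length y = n" using insert by auto
  then obtain k where k: "k < n" "y ! k \<noteq> h ! k" using insert(5) by (metis nth_equalityI)
  define q where "q = mshift 1 (Poly_Mapping.single k 1) p - mshift (y ! k) 0 p"
  have ev: "eval_mpoly q x = (x ! k - y ! k) * eval_mpoly p x" for x
    unfolding q_def by (simp add: eval_diff eval_mshift mon_single mon_single' mon_zero left_diff_distrib)
  have "Poly_Mapping.single k 1 \<in> monoms n" unfolding monoms_def using k by auto
  then have "q \<in> polys n" unfolding q_def using polys_diff polys_mshift monoms_zero p(1) by blast
  moreover have "\<forall>x\<in>insert y F. eval_mpoly q x = 0" using ev p by auto
  moreover have "eval_mpoly q h \<noteq> 0" using ev p k by auto
  ultimately show ?case by blast
qed


theorem mainTheorem4:
  fixes n :: nat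
    and ord :: "monom \<Rightarrow> monom \<Rightarrow> bool"
    and F :: "('a::field) list set"
    and h :: "'a list"
    and g :: "nat \<Rightarrow> 'a mpoly"
    and s :: nat
  assumes "term_order n ord"
    and "finite F"
    and "\<forall>x\<in>F. length x = n"
    and "length h = n"
    and "h \<notin> F"
    and "reduced_groebner_basis ord (vanish_ideal n F) (g ` {1..s})"
    and "\<forall>j\<in>{1..<s}. strict_ord ord (lm ord (g j)) (lm ord (g (Suc j)))"
  shows "Sm n ord (insert h F) =
           Sm n ord F \<union> {lm ord (g (LEAST j. j \<in> {1..s} \<and> eval_mpoly (g j) h \<noteq> 0))}"
proof -
  note TO = assms(1)
  let ?I = "vanish_ideal n F"
  let ?J = "vanish_ideal n (insert h F)"
  let ?G = "g ` {1..s}"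
  have GB: "groebner_basis ord ?I ?G" and lc1: "\<forall>q\<in>?G. lc ord q = 1"
    using assms(6) unfolding reduced_groebner_basis_def by auto
  have gI: "g j \<in> ?I" "g j \<noteq> 0" if "j \<in> {1..s}" for j
    using GB that unfolding groebner_basis_def by auto
  have gP: "g j \<in> polys n" if "j \<in> {1..s}" for j
    using gI[OF that] unfolding vanish_ideal_def by auto
  have gK: "Poly_Mapping.keys (g j) \<subseteq> monoms n" if "j \<in> {1..s}" for j
    using gP[OF that] unfolding polys_def by auto
  have Lg: "lm ord (g j) \<in> Poly_Mapping.keys (g j)" "\<forall>m'\<in>Poly_Mapping.keys (g j). ord m' (lm ord (g j))"
      "lm ord (g j) \<in> monoms n" if "j \<in> {1..s}" for j
    using lm_props[OF TO gP[OF that] gI(2)[OF that]] by auto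
  have lcg: "Poly_Mapping.lookup (g j) (lm ord (g j)) = 1" if "j \<in> {1..s}" for j
    using lc1 that unfolding lc_def by auto
  have JI: "?J \<subseteq> ?I" unfolding vanish_ideal_def by auto
  have strict_trans1: "strict_ord ord a c" if "a \<in> monoms n" "b \<in> monoms n" "c \<in> monoms n"
      "ord a b" "strict_ord ord b c" for a b c
    using that to_props(2,3)[OF TO] unfolding strict_ord_def by metis
  have strict_trans2: "strict_ord ord a c" if "a \<in> monoms n" "b \<in> monoms n" "c \<in> monoms n"
      "strict_ord ord a b" "ord b c" for a b c
    using that to_props(2,3)[OF TO] unfolding strict_ord_def by metis
  have chain: "1 \<le> j \<Longrightarrow> j < k \<Longrightarrow> k \<le> s \<Longrightarrow> strict_ord ord (lm ord (g j)) (lm ord (g k))" for j k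
  proof (induction k)
    case 0 then show ?case by simp
  next
    case (Suc k)
    have st: "strict_ord ord (lm ord (g k)) (lm ord (g (Suc k)))" using assms(7) Suc.prems by auto
    show ?case
    proof (cases "j = k")
      case True then show ?thesis using st by simp
    next
      case False
      then have "strict_ord ord (lm ord (g j)) (lm ord (g k))" using Suc by auto
      then show ?thesis using strict_trans1[of "lm ord (g j)" "lm ord (g k)" "lm ord (g (Suc k))"]
          Lg(3)[of j] Lg(3)[of k] Lg(3)[of "Suc k"] st Suc.prems unfolding strict_ord_def by auto
    qed
  qed
  have idx: "j < k" if "j \<in> {1..s}" "k \<in> {1..s}" "strict_ord ord (lm ord (g j)) (lm ord (g k))" for j k
  proof (rule ccontr)
    assume "\<not> j < k"
    then have "k = j \<or> k < j" by auto
    then show False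
    proof
      assume "k = j" then show False using that unfolding strict_ord_def by auto
    next
      assume "k < j"
      then have "strict_ord ord (lm ord (g k)) (lm ord (g j))" using chain that by auto
      then show False using that to_props(2)[OF TO] Lg(3)[OF that(1)] Lg(3)[OF that(2)]
        unfolding strict_ord_def by blast
    qed
  qed
  have ex: "\<exists>j. j \<in> {1..s} \<and> eval_mpoly (g j) h \<noteq> 0"
  proof (rule ccontr)
    assume nex: "\<not> ?thesis"
    obtain p where p: "p \<in> polys n" "\<forall>x\<in>F. eval_mpoly p x = 0" "eval_mpoly p h \<noteq> 0"
      using interp[OF assms(2-5)] by blast
    have pI: "p \<in> ?I" using p unfolding vanish_ideal_def by auto
    have "eval_mpoly p h = 0"
      by (rule descent[OF TO GB lc1, where R = "\<lambda>_. True"]) (use nex pI in auto)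
    then show False using p by simp
  qed
  define i where "i = (LEAST j. j \<in> {1..s} \<and> eval_mpoly (g j) h \<noteq> 0)"
  have iS: "i \<in> {1..s}" and gih: "eval_mpoly (g i) h \<noteq> 0"
    using LeastI_ex[OF ex] unfolding i_def by auto
  have below: "eval_mpoly (g j) h = 0" if "j \<in> {1..s}" "strict_ord ord (lm ord (g j)) (lm ord (g i))" for j
  proof -
    have "j < i" using idx[OF that(1) iS that(2)] .
    then show ?thesis using not_less_Least[of j "\<lambda>j. j \<in> {1..s} \<and> eval_mpoly (g j) h \<noteq> 0"] that(1)
      unfolding i_def by auto
  qed
  define mi where "mi = lm ord (g i)"
  have miM: "mi \<in> monoms n" unfolding mi_def using Lg(3)[OF iS] .
  have mi_in: "mi \<in> Sm n ord (insert h F)"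
  proof -
    have "\<not> (\<exists>f\<in>?J. f \<noteq> 0 \<and> lm ord f = mi)"
    proof
      assume "\<exists>f\<in>?J. f \<noteq> 0 \<and> lm ord f = mi"
      then obtain f where fJ: "f \<in> ?J" and fnz: "f \<noteq> 0" and lmf: "lm ord f = mi" by blast
      have fP: "f \<in> polys n" using fJ unfolding vanish_ideal_def by auto
      have fK: "Poly_Mapping.keys f \<subseteq> monoms n" using fP unfolding polys_def by auto
      note Lf = lm_props[OF TO fP fnz]
      define c where "c = Poly_Mapping.lookup f mi"
      have cnz: "c \<noteq> 0" unfolding c_def using Lf lmf by (auto simp: in_keys_iff)
      define f' where "f' = f - mshift c 0 (g i)"
      have f'P: "f' \<in> polys n" unfolding f'_def by (rule polys_diff[OF fP polys_mshift[OF monoms_zero gP[OF iS]]])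
      have f'I: "f' \<in> ?I"
      proof (rule vanish_I[OF f'P])
        fix x assume "x \<in> F"
        then have "eval_mpoly f x = 0" "eval_mpoly (g i) x = 0" using fJ gI[OF iS] unfolding vanish_ideal_def by auto
        then show "eval_mpoly f' x = 0" unfolding f'_def by (simp add: eval_diff eval_mshift)
      qed
      have fh: "eval_mpoly f h = 0" using fJ unfolding vanish_ideal_def by auto
      have f'h: "eval_mpoly f' h = - c * eval_mpoly (g i) h" unfolding f'_def
        by (simp add: eval_diff eval_mshift mon_zero fh)
      have lookm: "Poly_Mapping.lookup f' mi = 0"
        unfolding f'_def using lookup_mshift_add[of c 0 "g i" mi] lcg[OF iS]
        by (simp add: lookup_minus c_def mi_def)
      have keysf': "\<forall>k\<in>Poly_Mapping.keys f'. strict_ord ord k mi"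
      proof
        fix k assume kf: "k \<in> Poly_Mapping.keys f'"
        then have "k \<noteq> mi" using lookm by (auto simp: in_keys_iff)
        moreover have "ord k mi"
        proof -
          have "k \<in> Poly_Mapping.keys f \<or> k \<in> Poly_Mapping.keys (mshift c 0 (g i))"
            using kf keys_diff[of f "mshift c 0 (g i)"] unfolding f'_def by auto
          then show ?thesis
          proof
            assume "k \<in> Poly_Mapping.keys f" then show ?thesis using Lf lmf by auto
          next
            assume "k \<in> Poly_Mapping.keys (mshift c 0 (g i))"
            then have "k \<in> Poly_Mapping.keys (g i)" using keys_mshift_sub[of c 0 "g i"] by auto
            then show ?thesis using Lg(2)[OF iS] unfolding mi_def by auto
          qed
        qed
        ultimately show "strict_ord ord k mi" unfolding strict_ord_def by auto
      qed
      have "eval_mpoly f' h = 0"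
      proof (rule descent[OF TO GB lc1 _ _ f'I, where R = "\<lambda>k. strict_ord ord k mi"])
        show "\<forall>a\<in>monoms n. \<forall>b\<in>monoms n. strict_ord ord b mi \<longrightarrow> ord a b \<longrightarrow> strict_ord ord a mi"
          using strict_trans1 miM by blast
        show "\<forall>q\<in>?G. strict_ord ord (lm ord q) mi \<longrightarrow> eval_mpoly q h = 0"
          using below unfolding mi_def by blast
        show "\<forall>k\<in>Poly_Mapping.keys f'. strict_ord ord k mi" using keysf' .
      qed
      then show False using f'h cnz gih by simp
    qed
    then show ?thesis using miM unfolding Sm_def by auto
  qed
  have sub1: "Sm n ord F \<subseteq> Sm n ord (insert h F)"
    unfolding Sm_def using JI by blast
  have sub2: "Sm n ord (insert h F) \<subseteq> Sm n ord F \<union> {mi}"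
  proof
    fix m assume mT: "m \<in> Sm n ord (insert h F)"
    show "m \<in> Sm n ord F \<union> {mi}"
    proof (cases "m = mi")
      case True then show ?thesis by simp
    next
      case mne: False
      have mM: "m \<in> monoms n" using mT unfolding Sm_def by auto
      have noJ: "\<not> (\<exists>f\<in>?J. f \<noteq> 0 \<and> lm ord f = m)" using mT unfolding Sm_def by auto
      have "\<not> (\<exists>f\<in>?I. f \<noteq> 0 \<and> lm ord f = m)"
      proof
        assume "\<exists>f\<in>?I. f \<noteq> 0 \<and> lm ord f = m"
        then obtain f where fI: "f \<in> ?I" and fnz: "f \<noteq> 0" and lmf: "lm ord f = m" by blast
        have fP: "f \<in> polys n" using fI unfolding vanish_ideal_def by auto
        have fK: "Poly_Mapping.keys f \<subseteq> monoms n" using fP unfolding polys_def by auto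
        note Lf = lm_props[OF TO fP fnz]
        have "ord m mi \<or> ord mi m" using to_props(4)[OF TO mM miM] .
        then show False
        proof
          assume omi: "ord m mi"
          obtain q where qG: "q \<in> ?G" and qd: "mdvd (lm ord q) m"
            using GB fI fnz lmf unfolding groebner_basis_def by blast
          then obtain j where jS: "j \<in> {1..s}" and qj: "q = g j" by auto
          have ojm: "ord (lm ord (g j)) m" using mdvd_ord[OF TO Lg(3)[OF jS] mM] qd qj by simp
          have "strict_ord ord (lm ord (g j)) mi"
            using strict_trans1[OF Lg(3)[OF jS] mM miM ojm] omi mne unfolding strict_ord_def by auto
          then have gjh: "eval_mpoly (g j) h = 0" using below jS unfolding mi_def by auto
          define d where "d = m - lm ord (g j)"
          have dM: "d \<in> monoms n" unfolding d_def using monoms_diff[OF mM] .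
          have dm: "d + lm ord (g j) = m" unfolding d_def using mdvd_add qd qj by (simp add: add.commute)
          define f' where "f' = mshift 1 d (g j)"
          have "lm ord f' = m" "f' \<noteq> 0"
            using lm_mshift[OF TO gP[OF jS] gI(2)[OF jS] dM, of 1] dm unfolding f'_def by auto
          moreover have "f' \<in> ?J"
          proof (rule vanish_I)
            show "f' \<in> polys n" unfolding f'_def by (rule polys_mshift[OF dM gP[OF jS]])
            fix x assume "x \<in> insert h F"
            then have "eval_mpoly (g j) x = 0" using gjh gI(1)[OF jS] unfolding vanish_ideal_def by auto
            then show "eval_mpoly f' x = 0" unfolding f'_def by (simp add: eval_mshift)
          qed
          ultimately show False using noJ by blast
        next
          assume omi: "ord mi m"
          show False
          proof (cases "eval_mpoly f h = 0")
            case True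
            then have "f \<in> ?J" using fI unfolding vanish_ideal_def by auto
            then show False using noJ fnz lmf by blast
          next
            case False
            define c where "c = eval_mpoly f h / eval_mpoly (g i) h"
            define f' where "f' = f - mshift c 0 (g i)"
            have f'P: "f' \<in> polys n" unfolding f'_def by (rule polys_diff[OF fP polys_mshift[OF monoms_zero gP[OF iS]]])
            have f'J: "f' \<in> ?J"
            proof (rule vanish_I[OF f'P])
              fix x assume "x \<in> insert h F"
              then show "eval_mpoly f' x = 0"
              proof
                assume "x = h" then show ?thesis unfolding f'_def c_def using gih
                  by (simp add: eval_diff eval_mshift mon_zero)
              next
                assume "x \<in> F"
                then have "eval_mpoly f x = 0" "eval_mpoly (g i) x = 0" using fI gI[OF iS] unfolding vanish_ideal_def by auto
                then show "eval_mpoly f' x = 0" unfolding f'_def by (simp add: eval_diff eval_mshift)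
              qed
            qed
            have mgi: "m \<notin> Poly_Mapping.keys (g i)"
            proof
              assume "m \<in> Poly_Mapping.keys (g i)"
              then have "ord m mi" using Lg(2)[OF iS] unfolding mi_def by auto
              then show False using omi mne to_props(2)[OF TO mM miM] by blast
            qed
            have "Poly_Mapping.lookup f' m = Poly_Mapping.lookup f m"
              unfolding f'_def using lookup_mshift_add[of c 0 "g i" m] mgi
              by (simp add: lookup_minus in_keys_iff)
            then have mk: "m \<in> Poly_Mapping.keys f'" using Lf lmf by (simp add: in_keys_iff)
            have allk: "\<forall>k\<in>Poly_Mapping.keys f'. ord k m"
            proof
              fix k assume kf: "k \<in> Poly_Mapping.keys f'"
              have "k \<in> Poly_Mapping.keys f \<or> k \<in> Poly_Mapping.keys (mshift c 0 (g i))"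
                using kf keys_diff[of f "mshift c 0 (g i)"] unfolding f'_def by auto
              then show "ord k m"
              proof
                assume "k \<in> Poly_Mapping.keys f" then show ?thesis using Lf lmf by auto
              next
                assume "k \<in> Poly_Mapping.keys (mshift c 0 (g i))"
                then have kg: "k \<in> Poly_Mapping.keys (g i)" using keys_mshift_sub[of c 0 "g i"] by auto
                then have "ord k mi" using Lg(2)[OF iS] unfolding mi_def by auto
                then show ?thesis using to_props(3)[OF TO _ miM mM] omi kg gK[OF iS] by auto
              qed
            qed
            have "lm ord f' = m" using lm_eqI[OF TO _ mk allk] f'P unfolding polys_def by auto
            moreover have "f' \<noteq> 0" using mk by auto
            ultimately show False using noJ f'J by blast
          qed
        qed
      qed
      then show ?thesis using mM unfolding Sm_def by auto
    qed
  qed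
  show ?thesis unfolding i_def[symmetric] mi_def[symmetric]
    using sub1 sub2 mi_in by blast
qed

end
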